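(* Let $B_J=L+U\in\mathbb R^{n\times n}$ with $L$ strictly lower triangular, $U$ strictly upper triangular, $L\ne O$ and $U^{(i)}_r\ne O$ for all $i=1,\dots,n-1$. Then the iteration matrix $T(\mathcal B_{FUTR})$ of the splitting $\mathcal B_{FUTR}=(U^{(n-1)}_r,U^{(n-2)}_r,\dots,U^{(1)}_r,L)$ and the backward Gauss–Seidel iteration matrix $B_{bGS}=(I-U)^{-1}L$ have the same nonzero eigenvalues.
   Context: For $i\in\{1,\dots,n-1\}$, $U^{(i)}_r$ is the $n\times n$ matrix whose $i$-th row agrees with the $i$-th row of $U$ in columns $j\ge i+1$ and which is zero elsewhere (the $i$-th row of $U$). For $B\in\mathbb R^{n\times n}$, a splitting of $B$ of order $d\ge1$ is an ordered $d$-tuple $\mathcal B=(B_1,\dots,B_d)$ of real $n\times n$ matrices with $B_p\neq O$ for all $p$, $\sum_{p=1}^d B_p=B$, and $B_p\circ B_q=O$ (Hadamard product) for $p\ne q$. The iteration matrix of $\mathcal B$ is the $dn\times dn$ matrix $T(\mathcal B)=(I_{dn}-\mathcal L)^{-1}\mathcal U$, where $\mathcal L,\mathcal U$ are $d\times d$ block matrices with $n\times n$ blocks, $\mathcal L_{ij}=B_j$ if $i>j$ and $O$ otherwise, $\mathcal U_{ij}=B_j$ if $i\le j$ and $O$ otherwise. *)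

theory Defs
  imports "Jordan_Normal_Form.Matrix" "Jordan_Normal_Form.Char_Poly"
begin

definition minv :: "'a :: comm_ring_1 mat \<Rightarrow> 'a mat" where
  "minv A = (THE B. B \<in> carrier_mat (dim_row A) (dim_row A) \<and>
                    A * B = 1\<^sub>m (dim_row A) \<and> B * A = 1\<^sub>m (dim_row A))"

definition strictly_lower :: "nat \<Rightarrow> real mat \<Rightarrow> bool" where
  "strictly_lower n L \<longleftrightarrow> L \<in> carrier_mat n n \<and>
     (\<forall>i<n. \<forall>j<n. i \<le> j \<longrightarrow> L $$ (i, j) = 0)"

definition strictly_upper :: "nat \<Rightarrow> real mat \<Rightarrow> bool" where
  "strictly_upper n U \<longleftrightarrow> U \<in> carrier_mat n n \<and>
     (\<forall>i<n. \<forall>j<n. j \<le> i \<longrightarrow> U $$ (i, j) = 0)"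

(* U_r^{(i+1)} in the paper's 1-based notation: row i (0-based) of U in columns j \<ge> i+1,
   zero elsewhere. *)
definition Ur :: "nat \<Rightarrow> real mat \<Rightarrow> nat \<Rightarrow> real mat" where
  "Ur n U i = mat n n (\<lambda>(r, c). if r = i \<and> c > i then U $$ (r, c) else 0)"

definition blockL :: "nat \<Rightarrow> real mat list \<Rightarrow> real mat" where
  "blockL n Bs = mat (length Bs * n) (length Bs * n)
     (\<lambda>(a, b). if b div n < a div n then (Bs ! (b div n)) $$ (a mod n, b mod n) else 0)"

definition blockU :: "nat \<Rightarrow> real mat list \<Rightarrow> real mat" where
  "blockU n Bs = mat (length Bs * n) (length Bs * n)
     (\<lambda>(a, b). if a div n \<le> b div n then (Bs ! (b div n)) $$ (a mod n, b mod n) else 0)"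

definition iter_mat :: "nat \<Rightarrow> real mat list \<Rightarrow> real mat" where
  "iter_mat n Bs = minv (1\<^sub>m (length Bs * n) - blockL n Bs) * blockU n Bs"

(* \<B>_FUTR = (U_r^{(n-1)}, U_r^{(n-2)}, ..., U_r^{(1)}, L); 0-based rows n-2, ..., 0 *)
definition B_FUTR :: "nat \<Rightarrow> real mat \<Rightarrow> real mat \<Rightarrow> real mat list" where
  "B_FUTR n L U = map (\<lambda>k. Ur n U (n - 2 - k)) [0..<n - 1] @ [L]"

definition B_bGS :: "nat \<Rightarrow> real mat \<Rightarrow> real mat \<Rightarrow> real mat" where
  "B_bGS n L U = minv (1\<^sub>m n - U) * L"

end

theory Submission
  imports Defs
begin

lemma minv_eq:
  assumes A: "A \<in> carrier_mat m m" and B: "B \<in> carrier_mat m m"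
    and AB: "A * B = 1\<^sub>m m" and BA: "B * A = 1\<^sub>m m"
  shows "minv A = B"
  unfolding minv_def
proof (rule the_equality)
  show "B \<in> carrier_mat (dim_row A) (dim_row A) \<and> A * B = 1\<^sub>m (dim_row A) \<and> B * A = 1\<^sub>m (dim_row A)"
    using A B AB BA by auto
next
  fix C assume C: "C \<in> carrier_mat (dim_row A) (dim_row A) \<and> A * C = 1\<^sub>m (dim_row A) \<and> C * A = 1\<^sub>m (dim_row A)"
  hence Cc: "C \<in> carrier_mat m m" and CA: "C * A = 1\<^sub>m m" using A by auto
  have "C = C * (A * B)" using Cc AB by simp
  also have "\<dots> = (C * A) * B" using Cc A B by (simp add: assoc_mult_mat)
  also have "\<dots> = B" using CA B by simp
  finally show "C = B" .
qed

lemma det_inv_exists: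
  assumes A: "(A :: real mat) \<in> carrier_mat m m" and d: "det A \<noteq> 0"
  shows "\<exists>B \<in> carrier_mat m m. A * B = 1\<^sub>m m \<and> B * A = 1\<^sub>m m"
  using det_non_zero_imp_unit[OF A d, of "()"] unfolding Units_def ring_mat_def by auto

lemma det_unit_upper:
  assumes A: "(A :: real mat) \<in> carrier_mat m m" and diag: "\<forall>i<m. A $$ (i,i) = 1"
    and up: "\<forall>i<m. \<forall>j<m. j < i \<longrightarrow> A $$ (i,j) = 0"
  shows "det A = 1"
proof -
  have "upper_triangular A" using A up unfolding upper_triangular_def by auto
  from det_upper_triangular[OF this A] have "det A = prod_list (diag_mat A)" .
  also have "diag_mat A = map (\<lambda>i. 1) [0..<m]" using A diag unfolding diag_mat_def by auto
  also have "prod_list \<dots> = 1" by (induct m) auto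
  finally show ?thesis .
qed

lemma det_unit_lower:
  assumes A: "(A :: real mat) \<in> carrier_mat m m" and diag: "\<forall>i<m. A $$ (i,i) = 1"
    and lo: "\<forall>i<m. \<forall>j<m. i < j \<longrightarrow> A $$ (i,j) = 0"
  shows "det A = 1"
proof -
  have "det (transpose_mat A) = 1"
    by (rule det_unit_upper) (use A diag lo in auto)
  thus ?thesis using det_transpose[OF A] by simp
qed

lemma map_mult_vec_index:
  assumes M: "M \<in> carrier_mat m m" and v: "(v :: complex vec) \<in> carrier_vec m" and a: "a < m"
  shows "(map_mat complex_of_real M *\<^sub>v v) $ a = (\<Sum>b<m. complex_of_real (M $$ (a,b)) * v $ b)"
  using M v a by (auto simp: scalar_prod_def atLeast0LessThan intro!: sum.cong)

lemma eig_char: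
  assumes A: "A \<in> carrier_mat m m" and Ai: "Ai \<in> carrier_mat m m" and B: "B \<in> carrier_mat m m"
    and AAi: "A * Ai = 1\<^sub>m m" and AiA: "Ai * A = 1\<^sub>m m"
  shows "eigenvalue (map_mat complex_of_real (minv A * B)) z \<longleftrightarrow>
    (\<exists>v \<in> carrier_vec m. v \<noteq> 0\<^sub>v m \<and> map_mat complex_of_real B *\<^sub>v v = z \<cdot>\<^sub>v (map_mat complex_of_real A *\<^sub>v v))"
proof -
  have mi: "minv A = Ai" by (rule minv_eq[OF A Ai AAi AiA])
  define mA where "mA = map_mat complex_of_real A"
  define mAi where "mAi = map_mat complex_of_real Ai"
  define mB where "mB = map_mat complex_of_real B"
  have cA: "mA \<in> carrier_mat m m" and cAi: "mAi \<in> carrier_mat m m" and cB: "mB \<in> carrier_mat m m"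
    using A Ai B by (auto simp: mA_def mAi_def mB_def)
  have prod: "map_mat complex_of_real (minv A * B) = mAi * mB"
    unfolding mi mAi_def mB_def using of_real_hom.mat_hom_mult[OF Ai B] by simp
  have i1: "mA * mAi = 1\<^sub>m m" unfolding mA_def mAi_def
    using of_real_hom.mat_hom_mult[OF A Ai] AAi of_real_hom.mat_hom_one by metis
  have i2: "mAi * mA = 1\<^sub>m m" unfolding mA_def mAi_def
    using of_real_hom.mat_hom_mult[OF Ai A] AiA of_real_hom.mat_hom_one by metis
  show ?thesis unfolding prod eigenvalue_def eigenvector_def mA_def[symmetric] mB_def[symmetric]
  proof
    assume "\<exists>v. v \<in> carrier_vec (dim_row (mAi * mB)) \<and> v \<noteq> 0\<^sub>v (dim_row (mAi * mB)) \<and> mAi * mB *\<^sub>v v = z \<cdot>\<^sub>v v"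
    then obtain v where v: "v \<in> carrier_vec m" "v \<noteq> 0\<^sub>v m" "mAi * mB *\<^sub>v v = z \<cdot>\<^sub>v v"
      using cAi by auto
    have e1: "mAi *\<^sub>v (mB *\<^sub>v v) = z \<cdot>\<^sub>v v" using v cAi cB assoc_mult_mat_vec[OF cAi cB v(1)] by simp
    have "mB *\<^sub>v v = (mA * mAi) *\<^sub>v (mB *\<^sub>v v)" using i1 cB v by simp
    also have "\<dots> = mA *\<^sub>v (mAi *\<^sub>v (mB *\<^sub>v v))" using cA cAi cB v by (simp add: assoc_mult_mat_vec)
    also have "\<dots> = mA *\<^sub>v (z \<cdot>\<^sub>v v)" using e1 by simp
    also have "\<dots> = z \<cdot>\<^sub>v (mA *\<^sub>v v)" using cA v by (simp add: mult_mat_vec)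
    finally show "\<exists>v\<in>carrier_vec m. v \<noteq> 0\<^sub>v m \<and> mB *\<^sub>v v = z \<cdot>\<^sub>v (mA *\<^sub>v v)" using v by blast
  next
    assume "\<exists>v\<in>carrier_vec m. v \<noteq> 0\<^sub>v m \<and> mB *\<^sub>v v = z \<cdot>\<^sub>v (mA *\<^sub>v v)"
    then obtain v where v: "v \<in> carrier_vec m" "v \<noteq> 0\<^sub>v m" "mB *\<^sub>v v = z \<cdot>\<^sub>v (mA *\<^sub>v v)" by blast
    have "mAi * mB *\<^sub>v v = mAi *\<^sub>v (mB *\<^sub>v v)" using cAi cB v by (simp add: assoc_mult_mat_vec)
    also have "\<dots> = z \<cdot>\<^sub>v (mAi *\<^sub>v (mA *\<^sub>v v))" using v cAi cA by (simp add: mult_mat_vec)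
    also have "mAi *\<^sub>v (mA *\<^sub>v v) = (mAi * mA) *\<^sub>v v" using v cAi cA assoc_mult_mat_vec[OF cAi cA v(1)] by simp
    also have "\<dots> = v" using i2 v by simp
    finally show "\<exists>v. v \<in> carrier_vec (dim_row (mAi * mB)) \<and> v \<noteq> 0\<^sub>v (dim_row (mAi * mB)) \<and> mAi * mB *\<^sub>v v = z \<cdot>\<^sub>v v"
      using v cAi by auto
  qed
qed


definition rs :: "nat \<Rightarrow> real mat \<Rightarrow> (nat \<Rightarrow> complex) \<Rightarrow> nat \<Rightarrow> complex" where
  "rs n M f c = (\<Sum>c'<n. complex_of_real (M $$ (c, c')) * f c')"

lemma rs_U_cong:
  assumes U: "\<forall>i<n. \<forall>j<n. j \<le> i \<longrightarrow> U $$ (i, j) = 0" and c: "c < n"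
    and fg: "\<forall>c'. c < c' \<longrightarrow> c' < n \<longrightarrow> f c' = g c'"
  shows "rs n U f c = rs n U g c"
  unfolding rs_def
proof (rule sum.cong[OF refl])
  fix c' assume "c' \<in> {..<n}"
  thus "complex_of_real (U $$ (c, c')) * f c' = complex_of_real (U $$ (c, c')) * g c'"
    using U c fg by (cases "c < c'") auto
qed

lemma rs_U_last:
  assumes U: "\<forall>i<n. \<forall>j<n. j \<le> i \<longrightarrow> U $$ (i, j) = 0" and c: "c < n" and "\<not> c + 2 \<le> n"
  shows "rs n U f c = 0"
  unfolding rs_def using assms by (intro sum.neutral) auto

lemma rs_zero: "(\<forall>c'<n. f c' = 0) \<Longrightarrow> rs n M f c = 0"
  unfolding rs_def by (intro sum.neutral) auto

definition EqT where
  "EqT n L U z X k c \<longleftrightarrow>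
     rs n L (X (n - 1)) c + (if c + k + 2 \<le> n then rs n U (X (n - 2 - c)) c else 0)
     = z * (X k c - (if c + 2 \<le> n \<and> n \<le> c + k + 1 then rs n U (X (n - 2 - c)) c else 0))"

lemma core:
  assumes U: "\<forall>i<n. \<forall>j<n. j \<le> i \<longrightarrow> U $$ (i, j) = 0" and z: "z \<noteq> 0"
  shows "(\<exists>X. (\<exists>k<n. \<exists>c<n. X k c \<noteq> 0) \<and> (\<forall>k<n. \<forall>c<n. EqT n L U z X k c))
     \<longleftrightarrow> (\<exists>y. (\<exists>c<n. y c \<noteq> 0) \<and> (\<forall>c<n. rs n L y c = z * (y c - rs n U y c)))"
proof
  assume "\<exists>X. (\<exists>k<n. \<exists>c<n. X k c \<noteq> 0) \<and> (\<forall>k<n. \<forall>c<n. EqT n L U z X k c)"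
  then obtain X k0 c0 where nz: "k0 < n" "c0 < n" "X k0 c0 \<noteq> 0"
    and E: "\<And>k c. k < n \<Longrightarrow> c < n \<Longrightarrow> EqT n L U z X k c" by blast
  define y where "y = X (n - 1)"
  define G where "G c = (if c + 2 \<le> n then rs n U (X (n - 2 - c)) c else 0)" for c
  have A: "X k c = y c" if "k < n" "c < n" "n \<le> c + k + 1" for k c
  proof -
    have e1: "rs n L y c = z * (X k c - G c)"
      using E[OF that(1,2)] that unfolding EqT_def y_def G_def by auto
    have e2: "rs n L y c = z * (y c - G c)"
      using E[of "n - 1" c] that unfolding EqT_def y_def G_def by auto
    from e1 e2 z show ?thesis by simp
  qed
  have GU: "G c = rs n U y c" if "c < n" for c
  proof (cases "c + 2 \<le> n")
    case True
    have "rs n U (X (n - 2 - c)) c = rs n U y c"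
      by (rule rs_U_cong[OF U that]) (use A True in auto)
    thus ?thesis using True unfolding G_def by simp
  next
    case False
    thus ?thesis using rs_U_last[OF U that False] unfolding G_def by simp
  qed
  have yeq: "rs n L y c = z * (y c - rs n U y c)" if "c < n" for c
    using E[of "n - 1" c] that GU[OF that] unfolding EqT_def y_def G_def by auto
  have ynz: "\<exists>c<n. y c \<noteq> 0"
  proof (rule ccontr)
    assume "\<not> ?thesis"
    hence y0: "\<forall>c<n. y c = 0" by auto
    have "X k c = 0" if "k < n" "c < n" for k c
    proof (cases "n \<le> c + k + 1")
      case True thus ?thesis using A that y0 by auto
    next
      case False
      have r1: "rs n L y c = 0" by (rule rs_zero) (use y0 in auto)
      have "rs n U (X (n - 2 - c)) c = rs n U y c"
        by (rule rs_U_cong[OF U that(2)]) (use A False in auto)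
      also have "\<dots> = 0" by (rule rs_zero) (use y0 in auto)
      finally have r2: "rs n U (X (n - 2 - c)) c = 0" .
      have "z * X k c = 0" using E[OF that] False r1 r2 unfolding EqT_def y_def by auto
      thus ?thesis using z by simp
    qed
    thus False using nz by auto
  qed
  show "\<exists>y. (\<exists>c<n. y c \<noteq> 0) \<and> (\<forall>c<n. rs n L y c = z * (y c - rs n U y c))"
    using ynz yeq by blast
next
  assume "\<exists>y. (\<exists>c<n. y c \<noteq> 0) \<and> (\<forall>c<n. rs n L y c = z * (y c - rs n U y c))"
  then obtain y c0 where nz: "c0 < n" "y c0 \<noteq> 0"
    and Y: "\<And>c. c < n \<Longrightarrow> rs n L y c = z * (y c - rs n U y c)" by blast
  define w where "w c = y c + ((1 - z) / z) * rs n U y c" for c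
  define X where "X k c = (if n \<le> c + k + 1 then y c else w c)" for k c
  have Xl: "X (n - 1) = y" using nz unfolding X_def by (auto simp: fun_eq_iff)
  have XU: "rs n U (X (n - 2 - c)) c = rs n U y c" if "c < n" for c
    by (rule rs_U_cong[OF U that]) (auto simp: X_def)
  have "EqT n L U z X k c" if "k < n" "c < n" for k c
  proof (cases "c + k + 2 \<le> n")
    case True
    have zw: "z * w c = z * y c + (1 - z) * rs n U y c" using z by (simp add: w_def field_simps)
    have "rs n L y c + rs n U y c = z * w c"
      unfolding zw using Y[OF that(2)] by (simp add: algebra_simps)
    thus ?thesis using True XU[OF that(2)] unfolding EqT_def Xl by (auto simp: X_def)
  next
    case False
    show ?thesis
    proof (cases "c + 2 \<le> n")
      case True
      thus ?thesis using False Y[OF that(2)] XU[OF that(2)] unfolding EqT_def Xl by (auto simp: X_def)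
    next
      case F2: False
      thus ?thesis using False Y[OF that(2)] rs_U_last[OF U that(2) F2] unfolding EqT_def Xl
        by (auto simp: X_def)
    qed
  qed
  moreover have "X (n - 1) c0 \<noteq> 0" using Xl nz by simp
  moreover have "n - 1 < n" using nz by simp
  ultimately show "\<exists>X. (\<exists>k<n. \<exists>c<n. X k c \<noteq> 0) \<and> (\<forall>k<n. \<forall>c<n. EqT n L U z X k c)"
    using nz by blast
qed


lemma idx_lt: "k < n \<Longrightarrow> c < (n::nat) \<Longrightarrow> k * n + c < n * n"
proof -
  assume k: "k < n" and c: "c < n"
  have "(k + 1) * n \<le> n * n" using k by (intro mult_le_mono1) simp
  thus ?thesis using c by simp
qed

lemma sum_blocks:
  fixes f :: "nat \<Rightarrow> 'a :: comm_monoid_add"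
  shows "(\<Sum>b<m * n. f b) = (\<Sum>j<m. \<Sum>c<n. f (j * n + c))"
proof (induct m)
  case 0 thus ?case by simp
next
  case (Suc m)
  have "(\<Sum>b<Suc m * n. f b) = (\<Sum>b<m * n. f b) + (\<Sum>b\<in>{m*n..<m*n+n}. f b)"
    by (simp add: lessThan_atLeast0 add.commute sum.atLeastLessThan_concat)
  also have "(\<Sum>b\<in>{m*n..<m*n+n}. f b) = (\<Sum>c<n. f (m * n + c))"
    by (rule sum.reindex_bij_witness[of _ "\<lambda>c. m * n + c" "\<lambda>b. b - m * n"]) auto
  finally show ?case using Suc by simp
qed

lemma blockU_row:
  assumes len: "length Bs = n" and k: "k < n" and c: "c < n" and v: "v \<in> carrier_vec (n * n)"
  shows "(map_mat complex_of_real (blockU n Bs) *\<^sub>v v) $ (k * n + c)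
     = (\<Sum>j<n. if k \<le> j then rs n (Bs ! j) (\<lambda>c'. v $ (j * n + c')) c else 0)"
proof -
  have n: "n > 0" using k by simp
  have a: "k * n + c < n * n" using k c by (rule idx_lt)
  have cb: "blockU n Bs \<in> carrier_mat (n * n) (n * n)" unfolding blockU_def len by simp
  have "(map_mat complex_of_real (blockU n Bs) *\<^sub>v v) $ (k * n + c)
       = (\<Sum>b<n * n. complex_of_real (blockU n Bs $$ (k * n + c, b)) * v $ b)"
    by (rule map_mult_vec_index[OF cb v a])
  also have "\<dots> = (\<Sum>j<n. \<Sum>c'<n. complex_of_real (blockU n Bs $$ (k * n + c, j * n + c')) * v $ (j * n + c'))"
    by (rule sum_blocks)
  also have "\<dots> = (\<Sum>j<n. if k \<le> j then rs n (Bs ! j) (\<lambda>c'. v $ (j * n + c')) c else 0)"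
  proof (rule sum.cong[OF refl])
    fix j assume j: "j \<in> {..<n}"
    have ent: "blockU n Bs $$ (k * n + c, j * n + c') = (if k \<le> j then (Bs ! j) $$ (c, c') else 0)"
      if c': "c' < n" for c'
    proof -
      have "j * n + c' < n * n" using j c' by (intro idx_lt) auto
      thus ?thesis using a c c' n unfolding blockU_def len by simp
    qed
    show "(\<Sum>c'<n. complex_of_real (blockU n Bs $$ (k * n + c, j * n + c')) * v $ (j * n + c')) =
         (if k \<le> j then rs n (Bs ! j) (\<lambda>c'. v $ (j * n + c')) c else 0)"
      unfolding rs_def by (auto simp: ent)
  qed
  finally show ?thesis .
qed

lemma blockL_row:
  assumes len: "length Bs = n" and k: "k < n" and c: "c < n" and v: "v \<in> carrier_vec (n * n)"
  shows "(map_mat complex_of_real (blockL n Bs) *\<^sub>v v) $ (k * n + c)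
     = (\<Sum>j<n. if j < k then rs n (Bs ! j) (\<lambda>c'. v $ (j * n + c')) c else 0)"
proof -
  have n: "n > 0" using k by simp
  have a: "k * n + c < n * n" using k c by (rule idx_lt)
  have cb: "blockL n Bs \<in> carrier_mat (n * n) (n * n)" unfolding blockL_def len by simp
  have "(map_mat complex_of_real (blockL n Bs) *\<^sub>v v) $ (k * n + c)
       = (\<Sum>b<n * n. complex_of_real (blockL n Bs $$ (k * n + c, b)) * v $ b)"
    by (rule map_mult_vec_index[OF cb v a])
  also have "\<dots> = (\<Sum>j<n. \<Sum>c'<n. complex_of_real (blockL n Bs $$ (k * n + c, j * n + c')) * v $ (j * n + c'))"
    by (rule sum_blocks)
  also have "\<dots> = (\<Sum>j<n. if j < k then rs n (Bs ! j) (\<lambda>c'. v $ (j * n + c')) c else 0)"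
  proof (rule sum.cong[OF refl])
    fix j assume j: "j \<in> {..<n}"
    have ent: "blockL n Bs $$ (k * n + c, j * n + c') = (if j < k then (Bs ! j) $$ (c, c') else 0)"
      if c': "c' < n" for c'
    proof -
      have "j * n + c' < n * n" using j c' by (intro idx_lt) auto
      thus ?thesis using a c c' n unfolding blockL_def len by simp
    qed
    show "(\<Sum>c'<n. complex_of_real (blockL n Bs $$ (k * n + c, j * n + c')) * v $ (j * n + c')) =
         (if j < k then rs n (Bs ! j) (\<lambda>c'. v $ (j * n + c')) c else 0)"
      unfolding rs_def by (auto simp: ent)
  qed
  finally show ?thesis .
qed


lemma one_minus_row:
  assumes M: "M \<in> carrier_mat m m" and v: "(v :: complex vec) \<in> carrier_vec m" and a: "a < m"
  shows "(map_mat complex_of_real (1\<^sub>m m - M) *\<^sub>v v) $ a = v $ a - (map_mat complex_of_real M *\<^sub>v v) $ a"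
proof -
  have c1: "1\<^sub>m m - M \<in> carrier_mat m m" using M by (intro minus_carrier_mat) auto
  have "(map_mat complex_of_real (1\<^sub>m m - M) *\<^sub>v v) $ a
      = (\<Sum>b<m. complex_of_real ((1\<^sub>m m - M) $$ (a,b)) * v $ b)"
    by (rule map_mult_vec_index[OF c1 v a])
  also have "\<dots> = (\<Sum>b<m. (if a = b then v $ b else 0) - complex_of_real (M $$ (a,b)) * v $ b)"
    using M a by (intro sum.cong) (auto simp: algebra_simps)
  also have "\<dots> = v $ a - (\<Sum>b<m. complex_of_real (M $$ (a,b)) * v $ b)"
    using a by (simp add: sum_subtractf)
  also have "(\<Sum>b<m. complex_of_real (M $$ (a,b)) * v $ b) = (map_mat complex_of_real M *\<^sub>v v) $ a"
    by (rule map_mult_vec_index[OF M v a, symmetric])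
  finally show ?thesis .
qed

lemma rs_Ur:
  assumes U: "\<forall>i<n. \<forall>j<n. j \<le> i \<longrightarrow> U $$ (i, j) = 0" and c: "c < n" and r: "r < n"
  shows "rs n (Ur n U r) f c = (if c = r then rs n U f c else 0)"
  unfolding rs_def Ur_def using U c r by (auto intro!: sum.cong sum.neutral)

lemma B_FUTR_len: "n \<ge> 1 \<Longrightarrow> length (B_FUTR n L U) = n"
  unfolding B_FUTR_def by simp

lemma B_FUTR_last: "n \<ge> 1 \<Longrightarrow> B_FUTR n L U ! (n - 1) = L"
  unfolding B_FUTR_def by (simp add: nth_append)

lemma B_FUTR_nth: "j < n - 1 \<Longrightarrow> B_FUTR n L U ! j = Ur n U (n - 2 - j)"
  unfolding B_FUTR_def by (simp add: nth_append)

lemma sumB: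
  assumes U: "\<forall>i<n. \<forall>j<n. j \<le> i \<longrightarrow> U $$ (i, j) = 0" and c: "c < n"
  shows "(\<Sum>j<n. if Q j then rs n (B_FUTR n L U ! j) (X j) c else 0)
     = (if Q (n - 1) then rs n L (X (n - 1)) c else 0)
       + (if c + 2 \<le> n \<and> Q (n - 2 - c) then rs n U (X (n - 2 - c)) c else 0)"
proof -
  obtain m where nm: "n = Suc m" using c by (cases n) auto
  have "(\<Sum>j<n. if Q j then rs n (B_FUTR n L U ! j) (X j) c else 0)
     = (\<Sum>j<m. if Q j then rs n (B_FUTR n L U ! j) (X j) c else 0)
       + (if Q m then rs n (B_FUTR n L U ! m) (X m) c else 0)"
    unfolding nm by simp
  also have "(if Q m then rs n (B_FUTR n L U ! m) (X m) c else 0) = (if Q (n - 1) then rs n L (X (n - 1)) c else 0)"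
    using B_FUTR_last[of n L U] nm by simp
  also have "(\<Sum>j<m. if Q j then rs n (B_FUTR n L U ! j) (X j) c else 0)
     = (\<Sum>j<m. if j = n - 2 - c then (if c + 2 \<le> n \<and> Q j then rs n U (X j) c else 0) else 0)"
  proof (rule sum.cong[OF refl])
    fix j assume j: "j \<in> {..<m}"
    hence jn: "j < n - 1" using nm by simp
    have "rs n (B_FUTR n L U ! j) (X j) c = (if c = n - 2 - j then rs n U (X j) c else 0)"
      unfolding B_FUTR_nth[OF jn] by (rule rs_Ur[OF U c]) (use jn in simp)
    moreover have "(c = n - 2 - j) \<longleftrightarrow> (j = n - 2 - c \<and> c + 2 \<le> n)" using jn by auto
    ultimately show "(if Q j then rs n (B_FUTR n L U ! j) (X j) c else 0)
       = (if j = n - 2 - c then (if c + 2 \<le> n \<and> Q j then rs n U (X j) c else 0) else 0)"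
      by auto
  qed
  also have "\<dots> = (if c + 2 \<le> n \<and> Q (n - 2 - c) then rs n U (X (n - 2 - c)) c else 0)"
    using nm by (simp add: sum.delta')
  finally show ?thesis by simp
qed

lemma EqT_cong:
  assumes XY: "\<forall>j<n. \<forall>c'<n. X j c' = Y j c'" and k: "k < n" and c: "c < n"
  shows "EqT n L U z X k c = EqT n L U z Y k c"
proof -
  have r: "rs n M (X j) c = rs n M (Y j) c" if "j < n" for M j
    unfolding rs_def using XY that by (intro sum.cong) auto
  have "n - 1 < n" "n - 2 - c < n" using k by auto
  thus ?thesis unfolding EqT_def using r XY k c by simp
qed

lemma rowEq:
  assumes U: "\<forall>i<n. \<forall>j<n. j \<le> i \<longrightarrow> U $$ (i, j) = 0" and n: "n \<ge> 1"
    and v: "v \<in> carrier_vec (n * n)" and k: "k < n" and c: "c < n"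
  shows "(map_mat complex_of_real (blockU n (B_FUTR n L U)) *\<^sub>v v) $ (k * n + c)
     = z * (map_mat complex_of_real (1\<^sub>m (n * n) - blockL n (B_FUTR n L U)) *\<^sub>v v) $ (k * n + c)
     \<longleftrightarrow> EqT n L U z (\<lambda>j c'. v $ (j * n + c')) k c"
proof -
  define X where "X j c' = v $ (j * n + c')" for j c'
  have Xf: "(\<lambda>c'. v $ (j * n + c')) = X j" for j by (simp add: X_def fun_eq_iff)
  have len: "length (B_FUTR n L U) = n" using B_FUTR_len[OF n] .
  have cL: "blockL n (B_FUTR n L U) \<in> carrier_mat (n * n) (n * n)" unfolding blockL_def len by simp
  have a: "k * n + c < n * n" using k c by (rule idx_lt)
  have e1: "(map_mat complex_of_real (blockU n (B_FUTR n L U)) *\<^sub>v v) $ (k * n + c)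
     = rs n L (X (n - 1)) c + (if c + k + 2 \<le> n then rs n U (X (n - 2 - c)) c else 0)"
  proof -
    have "(map_mat complex_of_real (blockU n (B_FUTR n L U)) *\<^sub>v v) $ (k * n + c)
       = (\<Sum>j<n. if k \<le> j then rs n (B_FUTR n L U ! j) (X j) c else 0)"
      using blockU_row[OF len k c v] unfolding Xf .
    also have "\<dots> = (if k \<le> n - 1 then rs n L (X (n - 1)) c else 0)
       + (if c + 2 \<le> n \<and> k \<le> n - 2 - c then rs n U (X (n - 2 - c)) c else 0)"
      by (rule sumB[OF U c])
    also have "(k \<le> n - 1) = True" using k by simp
    also have "(c + 2 \<le> n \<and> k \<le> n - 2 - c) = (c + k + 2 \<le> n)" by auto
    finally show ?thesis by simp
  qed
  have e2: "(map_mat complex_of_real (blockL n (B_FUTR n L U)) *\<^sub>v v) $ (k * n + c)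
     = (if c + 2 \<le> n \<and> n \<le> c + k + 1 then rs n U (X (n - 2 - c)) c else 0)"
  proof -
    have "(map_mat complex_of_real (blockL n (B_FUTR n L U)) *\<^sub>v v) $ (k * n + c)
       = (\<Sum>j<n. if j < k then rs n (B_FUTR n L U ! j) (X j) c else 0)"
      using blockL_row[OF len k c v] unfolding Xf .
    also have "\<dots> = (if n - 1 < k then rs n L (X (n - 1)) c else 0)
       + (if c + 2 \<le> n \<and> n - 2 - c < k then rs n U (X (n - 2 - c)) c else 0)"
      by (rule sumB[OF U c])
    also have "(n - 1 < k) = False" using k by simp
    also have "(c + 2 \<le> n \<and> n - 2 - c < k) = (c + 2 \<le> n \<and> n \<le> c + k + 1)" by auto
    finally show ?thesis by simp
  qed
  have e3: "(map_mat complex_of_real (1\<^sub>m (n * n) - blockL n (B_FUTR n L U)) *\<^sub>v v) $ (k * n + c)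
     = X k c - (map_mat complex_of_real (blockL n (B_FUTR n L U)) *\<^sub>v v) $ (k * n + c)"
    using one_minus_row[OF cL v a] unfolding X_def .
  show ?thesis unfolding e3 e1 e2 EqT_def Xf[symmetric] X_def by simp
qed

lemma eigT:
  assumes U: "\<forall>i<n. \<forall>j<n. j \<le> i \<longrightarrow> U $$ (i, j) = 0" and n: "n \<ge> 1"
  shows "(\<exists>v\<in>carrier_vec (n * n). v \<noteq> 0\<^sub>v (n * n) \<and>
      map_mat complex_of_real (blockU n (B_FUTR n L U)) *\<^sub>v v
      = z \<cdot>\<^sub>v (map_mat complex_of_real (1\<^sub>m (n * n) - blockL n (B_FUTR n L U)) *\<^sub>v v))
   \<longleftrightarrow> (\<exists>X. (\<exists>k<n. \<exists>c<n. X k c \<noteq> 0) \<and> (\<forall>k<n. \<forall>c<n. EqT n L U z X k c))"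
  (is "?A \<longleftrightarrow> ?B")
proof
  have len: "length (B_FUTR n L U) = n" using B_FUTR_len[OF n] .
  have cU: "blockU n (B_FUTR n L U) \<in> carrier_mat (n * n) (n * n)" unfolding blockU_def len by simp
  have cL: "blockL n (B_FUTR n L U) \<in> carrier_mat (n * n) (n * n)" unfolding blockL_def len by simp
  have cIL: "1\<^sub>m (n * n) - blockL n (B_FUTR n L U) \<in> carrier_mat (n * n) (n * n)"
    using cL by (intro minus_carrier_mat) auto
  assume ?A
  then obtain v where v: "v \<in> carrier_vec (n * n)" "v \<noteq> 0\<^sub>v (n * n)"
    and E: "map_mat complex_of_real (blockU n (B_FUTR n L U)) *\<^sub>v v
      = z \<cdot>\<^sub>v (map_mat complex_of_real (1\<^sub>m (n * n) - blockL n (B_FUTR n L U)) *\<^sub>v v)" by blast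
  define X where "X j c' = v $ (j * n + c')" for j c'
  obtain a where a: "a < n * n" "v $ a \<noteq> 0" using v by (auto simp: vec_eq_iff)
  have n0: "n > 0" using n by simp
  have "a div n < n" using a(1) by (simp add: less_mult_imp_div_less)
  moreover have "a mod n < n" using n0 by simp
  moreover have "X (a div n) (a mod n) \<noteq> 0" unfolding X_def using a(2)
    by (metis mult.commute div_mult_mod_eq)
  ultimately have nz: "\<exists>k<n. \<exists>c<n. X k c \<noteq> 0" by blast
  have "EqT n L U z X k c" if k: "k < n" and c: "c < n" for k c
  proof -
    have a: "k * n + c < n * n" using k c by (rule idx_lt)
    have "(map_mat complex_of_real (blockU n (B_FUTR n L U)) *\<^sub>v v) $ (k * n + c)
     = z * (map_mat complex_of_real (1\<^sub>m (n * n) - blockL n (B_FUTR n L U)) *\<^sub>v v) $ (k * n + c)"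
      using arg_cong[OF E, of "\<lambda>w. w $ (k * n + c)"] a carrier_matD[OF cIL] v by simp
    thus ?thesis using rowEq[OF U n v(1) k c] unfolding X_def by simp
  qed
  thus ?B using nz by blast
next
  have len: "length (B_FUTR n L U) = n" using B_FUTR_len[OF n] .
  have cU: "blockU n (B_FUTR n L U) \<in> carrier_mat (n * n) (n * n)" unfolding blockU_def len by simp
  have cL: "blockL n (B_FUTR n L U) \<in> carrier_mat (n * n) (n * n)" unfolding blockL_def len by simp
  have cIL: "1\<^sub>m (n * n) - blockL n (B_FUTR n L U) \<in> carrier_mat (n * n) (n * n)"
    using cL by (intro minus_carrier_mat) auto
  have n0: "n > 0" using n by simp
  assume ?B
  then obtain X k0 c0 where nz: "k0 < n" "c0 < n" "X k0 c0 \<noteq> 0"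
    and E: "\<And>k c. k < n \<Longrightarrow> c < n \<Longrightarrow> EqT n L U z X k c" by blast
  define v where "v = vec (n * n) (\<lambda>a. X (a div n) (a mod n))"
  have vc: "v \<in> carrier_vec (n * n)" unfolding v_def by simp
  have vX: "v $ (j * n + c') = X j c'" if "j < n" "c' < n" for j c'
    using that idx_lt[OF that] n0 unfolding v_def by simp
  have vnz: "v \<noteq> 0\<^sub>v (n * n)"
  proof
    assume "v = 0\<^sub>v (n * n)"
    hence "v $ (k0 * n + c0) = 0" using idx_lt[OF nz(1,2)] by simp
    thus False using vX[OF nz(1,2)] nz(3) by simp
  qed
  have "map_mat complex_of_real (blockU n (B_FUTR n L U)) *\<^sub>v v
      = z \<cdot>\<^sub>v (map_mat complex_of_real (1\<^sub>m (n * n) - blockL n (B_FUTR n L U)) *\<^sub>v v)"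
  proof (rule eq_vecI)
    fix a assume "a < dim_vec (z \<cdot>\<^sub>v (map_mat complex_of_real (1\<^sub>m (n * n) - blockL n (B_FUTR n L U)) *\<^sub>v v))"
    hence a: "a < n * n" using carrier_matD[OF cIL] by simp
    define k where "k = a div n"
    define c where "c = a mod n"
    have k: "k < n" unfolding k_def using a by (simp add: less_mult_imp_div_less)
    have c: "c < n" unfolding c_def using n0 by simp
    have ak: "a = k * n + c" unfolding k_def c_def by simp
    have "EqT n L U z (\<lambda>j c'. v $ (j * n + c')) k c"
      using EqT_cong[of n "\<lambda>j c'. v $ (j * n + c')" X, OF _ k c] E[OF k c] vX by auto
    hence "(map_mat complex_of_real (blockU n (B_FUTR n L U)) *\<^sub>v v) $ (k * n + c)
     = z * (map_mat complex_of_real (1\<^sub>m (n * n) - blockL n (B_FUTR n L U)) *\<^sub>v v) $ (k * n + c)"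
      using rowEq[OF U n vc k c] by simp
    thus "(map_mat complex_of_real (blockU n (B_FUTR n L U)) *\<^sub>v v) $ a
      = (z \<cdot>\<^sub>v (map_mat complex_of_real (1\<^sub>m (n * n) - blockL n (B_FUTR n L U)) *\<^sub>v v)) $ a"
      using a carrier_matD[OF cIL] unfolding ak by simp
  next
    show "dim_vec (map_mat complex_of_real (blockU n (B_FUTR n L U)) *\<^sub>v v)
      = dim_vec (z \<cdot>\<^sub>v (map_mat complex_of_real (1\<^sub>m (n * n) - blockL n (B_FUTR n L U)) *\<^sub>v v))"
      using carrier_matD[OF cU] carrier_matD[OF cL] by simp
  qed
  thus ?A using vc vnz by blast
qed

lemma eigG:
  assumes U: "U \<in> carrier_mat n n" and L: "L \<in> carrier_mat n n"
  shows "(\<exists>v\<in>carrier_vec n. v \<noteq> 0\<^sub>v n \<and>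
      map_mat complex_of_real L *\<^sub>v v = z \<cdot>\<^sub>v (map_mat complex_of_real (1\<^sub>m n - U) *\<^sub>v v))
   \<longleftrightarrow> (\<exists>y. (\<exists>c<n. y c \<noteq> 0) \<and> (\<forall>c<n. rs n L y c = z * (y c - rs n U y c)))"
  (is "?A \<longleftrightarrow> ?B")
proof -
  have cIU: "1\<^sub>m n - U \<in> carrier_mat n n" using U by (intro minus_carrier_mat) auto
  have row: "(map_mat complex_of_real L *\<^sub>v v) $ c = z * (map_mat complex_of_real (1\<^sub>m n - U) *\<^sub>v v) $ c
     \<longleftrightarrow> rs n L (\<lambda>i. v $ i) c = z * (v $ c - rs n U (\<lambda>i. v $ i) c)"
    if v: "v \<in> carrier_vec n" and c: "c < n" for v c
    using one_minus_row[OF U v c] map_mult_vec_index[OF U v c] map_mult_vec_index[OF L v c]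
    unfolding rs_def by simp
  show ?thesis
  proof
    assume ?A
    then obtain v where v: "v \<in> carrier_vec n" "v \<noteq> 0\<^sub>v n"
      and E: "map_mat complex_of_real L *\<^sub>v v = z \<cdot>\<^sub>v (map_mat complex_of_real (1\<^sub>m n - U) *\<^sub>v v)" by blast
    have "\<exists>c<n. v $ c \<noteq> 0" using v by (auto simp: vec_eq_iff)
    moreover have "rs n L (\<lambda>i. v $ i) c = z * (v $ c - rs n U (\<lambda>i. v $ i) c)" if c: "c < n" for c
      using row[OF v(1) c] arg_cong[OF E, of "\<lambda>w. w $ c"] c carrier_matD[OF cIU] v(1) by simp
    ultimately show ?B by blast
  next
    assume ?B
    then obtain y c0 where nz: "c0 < n" "y c0 \<noteq> 0"
      and E: "\<And>c. c < n \<Longrightarrow> rs n L y c = z * (y c - rs n U y c)" by blast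
    define v where "v = vec n y"
    have vc: "v \<in> carrier_vec n" unfolding v_def by simp
    have vy: "rs n M (\<lambda>i. v $ i) c = rs n M y c" for M c unfolding rs_def v_def by (intro sum.cong) auto
    have vnz: "v \<noteq> 0\<^sub>v n"
    proof
      assume "v = 0\<^sub>v n"
      hence "v $ c0 = 0" using nz by simp
      thus False using nz unfolding v_def by simp
    qed
    have "map_mat complex_of_real L *\<^sub>v v = z \<cdot>\<^sub>v (map_mat complex_of_real (1\<^sub>m n - U) *\<^sub>v v)"
    proof (rule eq_vecI)
      fix c assume "c < dim_vec (z \<cdot>\<^sub>v (map_mat complex_of_real (1\<^sub>m n - U) *\<^sub>v v))"
      hence c: "c < n" using carrier_matD[OF cIU] by simp
      have "(map_mat complex_of_real L *\<^sub>v v) $ c = z * (map_mat complex_of_real (1\<^sub>m n - U) *\<^sub>v v) $ c"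
        using row[OF vc c] E[OF c] vy c unfolding v_def by simp
      thus "(map_mat complex_of_real L *\<^sub>v v) $ c = (z \<cdot>\<^sub>v (map_mat complex_of_real (1\<^sub>m n - U) *\<^sub>v v)) $ c"
        using c carrier_matD[OF cIU] by simp
    next
      show "dim_vec (map_mat complex_of_real L *\<^sub>v v) = dim_vec (z \<cdot>\<^sub>v (map_mat complex_of_real (1\<^sub>m n - U) *\<^sub>v v))"
        using carrier_matD[OF L] carrier_matD[OF U] by simp
    qed
    thus ?A using vc vnz by blast
  qed
qed

theorem theorem6p3:
  fixes n :: nat and L U :: "real mat"
  assumes "strictly_lower n L" and "strictly_upper n U"
    and "L \<noteq> 0\<^sub>m n n"
    and "\<forall>i < n - 1. Ur n U i \<noteq> 0\<^sub>m n n"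
  shows "\<forall>z::complex. z \<noteq> 0 \<longrightarrow>
     (eigenvalue (map_mat complex_of_real (iter_mat n (B_FUTR n L U))) z
      \<longleftrightarrow> eigenvalue (map_mat complex_of_real (B_bGS n L U)) z)"
proof (intro allI impI)
  fix z :: complex assume z: "z \<noteq> 0"
  have L: "L \<in> carrier_mat n n" using assms(1) unfolding strictly_lower_def by simp
  have Uc: "U \<in> carrier_mat n n" and U: "\<forall>i<n. \<forall>j<n. j \<le> i \<longrightarrow> U $$ (i, j) = 0"
    using assms(2) unfolding strictly_upper_def by auto
  have n: "n \<ge> 1"
  proof (rule ccontr)
    assume "\<not> n \<ge> 1"
    hence "n = 0" by simp
    hence "L = 0\<^sub>m n n" using L by (intro eq_matI) auto
    thus False using assms(3) by simp
  qed
  define Bs where "Bs = B_FUTR n L U"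
  have len: "length Bs = n" unfolding Bs_def using B_FUTR_len[OF n] .
  have cU: "blockU n Bs \<in> carrier_mat (n * n) (n * n)" unfolding blockU_def len by simp
  have cL: "blockL n Bs \<in> carrier_mat (n * n) (n * n)" unfolding blockL_def len by simp
  define A1 where "A1 = 1\<^sub>m (n * n) - blockL n Bs"
  have cA1: "A1 \<in> carrier_mat (n * n) (n * n)" unfolding A1_def using cL by (intro minus_carrier_mat) auto
  have bL0: "blockL n Bs $$ (i, j) = 0" if "i < n * n" "j < n * n" "i \<le> j" for i j
  proof -
    have "i div n \<le> j div n" using that(3) by (rule div_le_mono)
    thus ?thesis using that unfolding blockL_def len by simp
  qed
  have "det A1 = 1"
    by (rule det_unit_lower[OF cA1]) (use cL bL0 in \<open>auto simp: A1_def\<close>)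
  then obtain Ai where cAi: "Ai \<in> carrier_mat (n * n) (n * n)" and Ai: "A1 * Ai = 1\<^sub>m (n * n)" "Ai * A1 = 1\<^sub>m (n * n)"
    using det_inv_exists[OF cA1] by auto
  have T: "iter_mat n (B_FUTR n L U) = minv A1 * blockU n Bs"
    unfolding iter_mat_def Bs_def[symmetric] A1_def len ..
  define A2 where "A2 = 1\<^sub>m n - U"
  have cA2: "A2 \<in> carrier_mat n n" unfolding A2_def using Uc by (intro minus_carrier_mat) auto
  have "det A2 = 1"
    by (rule det_unit_upper[OF cA2]) (use Uc U in \<open>auto simp: A2_def\<close>)
  then obtain Bi where cBi: "Bi \<in> carrier_mat n n" and Bi: "A2 * Bi = 1\<^sub>m n" "Bi * A2 = 1\<^sub>m n"
    using det_inv_exists[OF cA2] by auto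
  have G: "B_bGS n L U = minv A2 * L" unfolding B_bGS_def A2_def ..
  show "eigenvalue (map_mat complex_of_real (iter_mat n (B_FUTR n L U))) z
      \<longleftrightarrow> eigenvalue (map_mat complex_of_real (B_bGS n L U)) z"
    unfolding T G eig_char[OF cA1 cAi cU Ai] eig_char[OF cA2 cBi L Bi]
    unfolding A1_def A2_def Bs_def eigT[OF U n] eigG[OF Uc L]
    by (rule core[OF U z])
qed

end
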